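(* Let $0<\alpha<2$ and let $\theta_1\neq\theta_2$ be constants. No ellipse with unequal semi-axes is a rotating patch for the $\alpha$-patch equation. Precisely: let $R_1\neq R_2$ be positive numbers and let $D_0$ be the region bounded by the ellipse $z_0(x)=(R_1\cos x,R_2\sin x)$, $x\in[0,2\pi]$. Then there is no real $\Omega$ such that the rigidly rotated domains $D(t)=e^{i\Omega t}D_0$ (rotation about the center of mass, the origin) form a solution of the $\alpha$-patch evolution. Equivalently, there is no real $\Omega$ such that $$\Big\langle c_\alpha\int_0^{2\pi}\frac{\partial_x z_0(x)-\partial_x z_0(x-y)}{|z_0(x)-z_0(x-y)|^{\alpha}}\,dy,\ \partial_x z_0(x)^\perp\Big\rangle=\big\langle i\Omega z_0(x),\ \partial_x z_0(x)^\perp\big\rangle\quad\text{for all }x\in[0,2\pi],$$ where $iz$ denotes the rotation of $z$ by $\pi/2$.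
   Context: The $\alpha$-patch problem: $\theta(x,t)=\theta_1$ on a bounded simply connected domain $D(t)\subset\mathbb R^2$ and $\theta_2$ on its complement, transported by the velocity $v=\nabla^\perp(-\Delta)^{-(1-\alpha/2)}\theta$. Parametrizing the boundary $\partial D(t)$ by a $2\pi$-periodic curve $z(x,t)$, the evolution (up to tangential reparametrization, which does not change the domain) is $$\partial_t z(x,t)=c_\alpha\int_0^{2\pi}\frac{\partial_x z(x,t)-\partial_x z(x-y,t)}{|z(x,t)-z(x-y,t)|^{\alpha}}\,dy,\qquad c_\alpha=-\frac{(\theta_2-\theta_1)\Gamma(\alpha/2)}{\pi^2 2^{2-\alpha}\Gamma(\frac{2-\alpha}{2})}.$$ Only the normal component of the velocity determines the evolution of the domain. A rotating patch is a solution whose domain at time $t$ is the initial domain rotated by angle $\Omega t$ about its center of mass, for a constant angular velocity $\Omega$; $\partial_x z^\perp$ denotes the normal vector obtained by rotating $\partial_x z$ by $\pi/2$. *)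

theory Defs
  imports "HOL-Analysis.Analysis"
begin

text \<open>Points of the plane are represented as complex numbers; the Euclidean inner
product is the library's inner product on complex; rotation by pi/2 is
multiplication by the imaginary unit.\<close>

definition c_alpha :: "real \<Rightarrow> real \<Rightarrow> real \<Rightarrow> real" where
  "c_alpha \<alpha> \<theta>1 \<theta>2 =
     - ((\<theta>2 - \<theta>1) * Gamma (\<alpha> / 2)) /
       (pi\<^sup>2 * 2 powr (2 - \<alpha>) * Gamma ((2 - \<alpha>) / 2))"

definition perp :: "complex \<Rightarrow> complex" where
  "perp w = \<i> * w"

definition patch_velocity ::
  "real \<Rightarrow> real \<Rightarrow> real \<Rightarrow> (real \<Rightarrow> complex) \<Rightarrow> (real \<Rightarrow> complex) \<Rightarrow> real \<Rightarrow> complex" where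
  "patch_velocity \<alpha> \<theta>1 \<theta>2 z dz x =
     complex_of_real (c_alpha \<alpha> \<theta>1 \<theta>2) *
     integral {0..2*pi} (\<lambda>y. (dz x - dz (x - y)) / complex_of_real (cmod (z x - z (x - y)) powr \<alpha>))"

definition ellipse :: "real \<Rightarrow> real \<Rightarrow> real \<Rightarrow> complex" where
  "ellipse R1 R2 x = Complex (R1 * cos x) (R2 * sin x)"

definition ellipse_deriv :: "real \<Rightarrow> real \<Rightarrow> real \<Rightarrow> complex" where
  "ellipse_deriv R1 R2 x = Complex (- R1 * sin x) (R2 * cos x)"

end

theory Submission
  imports Defs
begin

lemma ellipse_chord:
  "ellipse R1 R2 (u+v) - ellipse R1 R2 (u-v) = Complex (-2 * R1 * sin u * sin v) (2 * R2 * cos u * sin v)"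
  by (simp add: ellipse_def complex_eq_iff sin_add sin_diff cos_add cos_diff algebra_simps)

lemma ellipse_deriv_chord:
  "ellipse_deriv R1 R2 (u+v) - ellipse_deriv R1 R2 (u-v) = Complex (-2 * R1 * cos u * sin v) (-2 * R2 * sin u * sin v)"
  by (simp add: ellipse_deriv_def complex_eq_iff sin_add sin_diff cos_add cos_diff algebra_simps)

lemma cmod_chord:
  "cmod (ellipse R1 R2 x - ellipse R1 R2 (x-y)) = 2 * \<bar>sin (y/2)\<bar>  *  sqrt (R1^2 * sin (x-y/2)^2 + R2^2 * cos(x-y/2)^2)"
proof -
  have "cmod (ellipse R1 R2 x - ellipse R1 R2 (x-y)) = cmod (ellipse R1 R2 ((x-y/2)+y/2) - ellipse R1 R2 ((x-y/2)-y/2))"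
    by simp
  also have "\<dots> = sqrt ((2 * \<bar>sin (y/2)\<bar>)^2  *  (R1^2 * sin (x-y/2)^2 + R2^2 * cos(x-y/2)^2))"
    unfolding ellipse_chord cmod_def by (simp add: power_mult_distrib algebra_simps power2_abs)
  also have "\<dots> = 2 * \<bar>sin (y/2)\<bar>  *  sqrt (R1^2 * sin (x-y/2)^2 + R2^2 * cos(x-y/2)^2)"
    by (simp add: real_sqrt_mult)
  finally show ?thesis .
qed

lemma cmod_deriv_chord:
  "cmod (ellipse_deriv R1 R2 x - ellipse_deriv R1 R2 (x-y)) = 2 * \<bar>sin (y/2)\<bar>  *  sqrt (R1^2 * cos (x-y/2)^2 + R2^2 * sin(x-y/2)^2)"
proof -
  have "cmod (ellipse_deriv R1 R2 x - ellipse_deriv R1 R2 (x-y)) = cmod (ellipse_deriv R1 R2 ((x-y/2)+y/2) - ellipse_deriv R1 R2 ((x-y/2)-y/2))"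
    by simp
  also have "\<dots> = sqrt ((2 * \<bar>sin (y/2)\<bar>)^2  *  (R1^2 * cos (x-y/2)^2 + R2^2 * sin(x-y/2)^2))"
    unfolding ellipse_deriv_chord cmod_def by (simp add: power_mult_distrib algebra_simps power2_abs)
  also have "\<dots> = 2 * \<bar>sin (y/2)\<bar>  *  sqrt (R1^2 * cos (x-y/2)^2 + R2^2 * sin(x-y/2)^2)"
    by (simp add: real_sqrt_mult)
  finally show ?thesis .
qed

lemma inner_num:
  "inner (ellipse_deriv R1 R2 x - ellipse_deriv R1 R2 (x-y)) (perp (ellipse_deriv R1 R2 x)) = R1 * R2 * sin y"
proof -
  have "inner (ellipse_deriv R1 R2 x - ellipse_deriv R1 R2 (x-y)) (perp (ellipse_deriv R1 R2 x)) = R1 * (R2 * (cos x * (cos x * sin y))) + R1 * (R2 * (sin x * (sin x * sin y)))"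
    by (simp add: ellipse_deriv_def perp_def inner_complex_def sin_diff cos_diff algebra_simps)
  also have "\<dots> = R1*R2 * sin y * ((sin x)^2+(cos x)^2)" by algebra
  also have "\<dots> = R1 * R2 * sin y" by simp
  finally show ?thesis .
qed

lemma inner_rhs:
  "inner (\<i>  *  complex_of_real \<Omega>  *  ellipse R1 R2 x) (perp (ellipse_deriv R1 R2 x)) = \<Omega> * (R2^2-R1^2) * sin x * cos x"
  by (simp add: ellipse_deriv_def ellipse_def perp_def inner_complex_def algebra_simps power2_eq_square)

lemma ellipse_alt: "ellipse R1 R2 x = complex_of_real (R1 * cos x) + \<i> * complex_of_real (R2 * sin x)"
  by (simp add: ellipse_def complex_eq_iff)
lemma ellipse_deriv_alt: "ellipse_deriv R1 R2 x = complex_of_real (- R1 * sin x) + \<i> * complex_of_real (R2 * cos x)"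
  by (simp add: ellipse_deriv_def complex_eq_iff)

lemma meas1: "(\<lambda>y. (ellipse_deriv R1 R2 x - ellipse_deriv R1 R2 (x - y)) / complex_of_real (cmod (ellipse R1 R2 x - ellipse R1 R2 (x - y)) powr a)) \<in> borel_measurable borel"
  unfolding ellipse_alt ellipse_deriv_alt by measurable

lemma meas2: "(\<lambda>(x,y). indicator ({0..pi} \<times> {0..2*pi}) (x,y) * (sin y / (cmod (ellipse R1 R2 x - ellipse R1 R2 (x - y)) powr a) * sin (4*x)))
   \<in> borel_measurable (lborel \<Otimes>\<^sub>M lborel)"
  unfolding ellipse_alt by measurable

lemma sin_ge_tcos: assumes "0 \<le> t" "t \<le> pi/2" shows "t * cos t \<le> sin t"
proof -
  have "(\<lambda>t. sin t - t * cos t) 0 \<le> (\<lambda>t. sin t - t * cos t) t"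
  proof (rule DERIV_nonneg_imp_nondecreasing[OF assms(1)])
    fix x assume x: "0 \<le> x" "x \<le> t"
    show "\<exists>y. DERIV (\<lambda>t. sin t - t * cos t) x :> y \<and> 0 \<le> y"
    proof (intro exI conjI)
      show "DERIV (\<lambda>t. sin t - t * cos t) x :> x * sin x"
        by (auto intro!: derivative_eq_intros simp: algebra_simps)
      show "0 \<le> x * sin x" using x assms by (intro mult_nonneg_nonneg sin_ge_zero) auto
    qed
  qed
  then show ?thesis by simp
qed

lemma sin_ge_quarter: assumes "0 \<le> t" "t \<le> pi/2" shows "t/4 \<le> sin t"
proof (cases "t \<le> pi/3")
  case True
  have "cos (pi/3) \<le> cos t" using True assms by (intro cos_monotone_0_pi_le) auto
  then have "1/2 \<le> cos t" by (simp add: cos_60)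
  then have "t/2 \<le> t * cos t" using assms by (simp add: mult_left_mono[of "1/2" "cos t" t, simplified])
  with sin_ge_tcos[OF assms] assms show ?thesis by linarith
next
  case False
  have "sin (pi/3) \<le> sin t" using False assms by (intro sin_monotone_2pi_le) auto
  then have "sqrt 3 / 2 \<le> sin t" by (simp add: sin_60)
  moreover have "1 \<le> sqrt 3" by simp
  moreover have "t/4 \<le> 1/2" using assms pi_less_4 by simp
  ultimately show ?thesis by linarith
qed

definition W :: "real \<Rightarrow> real \<Rightarrow> real" where
  "W \<alpha> y = 1 + 8 powr (\<alpha> - 1) * (y powr (1 - \<alpha>) + (2 * pi - y) powr (1 - \<alpha>))"

lemma W_ge1: assumes "0 \<le> y" "y \<le> 2 * pi" shows "1 \<le> W \<alpha> y"
proof -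
  have "0 \<le> 8 powr (\<alpha> - 1) * (y powr (1 - \<alpha>) + (2 * pi - y) powr (1 - \<alpha>))"
    by (intro mult_nonneg_nonneg add_nonneg_nonneg) simp_all
  then show ?thesis unfolding W_def by linarith
qed

lemma spow_le_W:
  assumes "0 < \<alpha>" "\<alpha> < 2" "0 < y" "y < 2 * pi"
  shows "sin (y/2) powr (1 - \<alpha>) \<le> W \<alpha> y"
proof -
  have s0: "0 < sin (y/2)" using assms by (intro sin_gt_zero) auto
  have nn1: "0 \<le> y powr (1 - \<alpha>)" "0 \<le> (2 * pi - y) powr (1 - \<alpha>)" "0 \<le> 8 powr (\<alpha> - 1)" by simp_all
  show ?thesis
  proof (cases "\<alpha> \<le> 1")
    case True
    have "sin (y/2) powr (1 - \<alpha>) \<le> 1" using True s0 by (intro powr_le1) auto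
    moreover have "1 \<le> W \<alpha> y" using assms by (intro W_ge1) auto
    ultimately show ?thesis by linarith
  next
    case False
    have g: "1 - \<alpha> \<le> 0" using False by simp
    have e8: "8 powr (\<alpha> - 1) = inverse (8 powr (1 - \<alpha>))" by (simp add: powr_minus[symmetric])
    show ?thesis
    proof (cases "y \<le> pi")
      case True
      have q: "(y/2)/4 \<le> sin (y/2)" by (rule sin_ge_quarter) (use True assms in auto)
      have "sin (y/2) powr (1 - \<alpha>) \<le> (y/8) powr (1 - \<alpha>)"
        by (rule powr_mono2'[OF g]) (use q assms in auto)
      also have "(y/8) powr (1 - \<alpha>) = y powr (1 - \<alpha>) / 8 powr (1 - \<alpha>)"
        using assms by (simp add: powr_divide)
      also have "\<dots> = 8 powr (\<alpha> - 1) * y powr (1 - \<alpha>)"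
        by (simp only: e8 divide_inverse mult.commute)
      finally have "sin (y/2) powr (1 - \<alpha>) \<le> 8 powr (\<alpha> - 1) * y powr (1 - \<alpha>)" .
      moreover have "8 powr (\<alpha> - 1) * y powr (1 - \<alpha>) \<le> 8 powr (\<alpha> - 1) * (y powr (1 - \<alpha>) + (2 * pi - y) powr (1 - \<alpha>))"
        by (rule mult_left_mono) (use nn1 in auto)
      ultimately show ?thesis unfolding W_def by linarith
    next
      case yb: False
      have q0: "(pi - y/2)/4 \<le> sin (pi - y/2)" by (rule sin_ge_quarter) (use yb assms in auto)
      have q: "(2 * pi - y)/8 \<le> sin (y/2)"
      proof -
        have "(2 * pi - y)/8 = (pi - y/2)/4" by simp
        moreover have "sin (pi - y/2) = sin (y/2)" by (rule sin_pi_minus)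
        ultimately show ?thesis using q0 by simp
      qed
      have "sin (y/2) powr (1 - \<alpha>) \<le> ((2 * pi - y)/8) powr (1 - \<alpha>)"
        by (rule powr_mono2'[OF g]) (use q assms in auto)
      also have "((2 * pi - y)/8) powr (1 - \<alpha>) = (2 * pi - y) powr (1 - \<alpha>) / 8 powr (1 - \<alpha>)"
        using assms by (simp add: powr_divide)
      also have "\<dots> = 8 powr (\<alpha> - 1) * (2 * pi - y) powr (1 - \<alpha>)"
        by (simp only: e8 divide_inverse mult.commute)
      finally have "sin (y/2) powr (1 - \<alpha>) \<le> 8 powr (\<alpha> - 1) * (2 * pi - y) powr (1 - \<alpha>)" .
      moreover have "8 powr (\<alpha> - 1) * (2 * pi - y) powr (1 - \<alpha>) \<le> 8 powr (\<alpha> - 1) * (y powr (1 - \<alpha>) + (2 * pi - y) powr (1 - \<alpha>))"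
        by (rule mult_left_mono) (use nn1 in auto)
      ultimately show ?thesis unfolding W_def by linarith
    qed
  qed
qed

lemma has_integral_reflect_ab:
  fixes f :: "real \<Rightarrow> 'b::real_normed_vector"
  assumes "(f has_integral I) {a..b}"
  shows "((\<lambda>x. f (a + b - x)) has_integral I) {a..b}"
proof -
  have "((\<lambda>x. f (- x)) has_integral I) {-b..-a}" using assms by simp
  then have "((\<lambda>x. f (- (x + (- a - b)))) has_integral I) {-b - (- a - b)..-a - (- a - b)}"
    by (rule has_integral_shift_real_ivl)
  then show ?thesis by (simp add: algebra_simps)
qed

lemma integrable_reflect_ab:
  fixes f :: "real \<Rightarrow> 'b::real_normed_vector"
  assumes "f integrable_on {a..b}"
  shows "(\<lambda>x. f (a + b - x)) integrable_on {a..b}"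
  using has_integral_reflect_ab assms unfolding integrable_on_def by blast

lemma integral_reflect_ab:
  fixes f :: "real \<Rightarrow> 'b::real_normed_vector"
  assumes "f integrable_on {a..b}"
  shows "integral {a..b} (\<lambda>x. f (a + b - x)) = integral {a..b} f"
  using has_integral_reflect_ab[OF integrable_integral[OF assms]] by (rule integral_unique)

lemma W_integrable: assumes "0 < \<alpha>" "\<alpha> < 2" shows "W \<alpha> integrable_on {0..2 * pi}"
proof -
  have i1: "(\<lambda>y. y powr (1 - \<alpha>)) integrable_on {0..2 * pi}"
    using assms by (intro integrable_on_powr_from_0) auto
  have "(\<lambda>y. (0 + 2 * pi - y) powr (1 - \<alpha>)) integrable_on {0..2 * pi}"
    by (rule integrable_reflect_ab[OF i1])
  then have i2: "(\<lambda>y. (2 * pi - y) powr (1 - \<alpha>)) integrable_on {0..2 * pi}" by simp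
  have "(\<lambda>y. y powr (1 - \<alpha>) + (2*pi - y) powr (1 - \<alpha>)) integrable_on {0..2*pi}"
    by (rule integrable_add[OF i1 i2])
  from integrable_on_cmult_left[OF this, of "8 powr (\<alpha> - 1)"]
  have "(\<lambda>y. 8 powr (\<alpha> - 1) * (y powr (1 - \<alpha>) + (2*pi - y) powr (1 - \<alpha>))) integrable_on {0..2*pi}"
    by simp
  then show ?thesis unfolding W_def
    by (intro integrable_add integrable_const_ivl)
qed

lemma quotient_bound:
  fixes s m K N D \<alpha> :: real
  assumes "0 < s" "0 < m" "0 \<le> K" "0 \<le> N" "N \<le> 2 * s * K" "2 * s * m \<le> D" "0 < \<alpha>"
  shows "N / D powr \<alpha> \<le> 2 * K * (2 * m) powr (-\<alpha>) * s powr (1-\<alpha>)"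
proof -
  have sm: "0 < 2 * s * m" using assms by simp
  have D0: "0 < D" using sm assms(6) by linarith
  have e1: "(2 * s * m) powr \<alpha> = s powr \<alpha> * (2 * m) powr \<alpha>"
    using assms by (simp add: powr_mult[symmetric] mult_ac)
  have e2: "s powr (1-\<alpha>) = s / s powr \<alpha>"
    using assms by (simp add: powr_diff)
  have "N / D powr \<alpha> \<le> (2 * s * K) / D powr \<alpha>" by (rule divide_right_mono[OF assms(5)]) simp
  also have "\<dots> \<le> (2 * s * K) / (2 * s * m) powr \<alpha>"
  proof (rule divide_left_mono)
    show "(2 * s * m) powr \<alpha> \<le> D powr \<alpha>" using assms sm by (intro powr_mono2) auto
    show "0 \<le> 2 * s * K" using assms by simp
    show "0 < D powr \<alpha> * (2 * s * m) powr \<alpha>" using D0 sm by (intro mult_pos_pos) auto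
  qed
  also have "\<dots> = 2 * K * (2 * m) powr (-\<alpha>) * s powr (1-\<alpha>)"
    unfolding e1 e2 using assms by (simp add: powr_minus divide_inverse mult_ac)
  finally show ?thesis .
qed

definition gg :: "real \<Rightarrow> real \<Rightarrow> real \<Rightarrow> real \<Rightarrow> real \<Rightarrow> real" where
  "gg \<alpha> R1 R2 x y = sin y / cmod (ellipse R1 R2 x - ellipse R1 R2 (x - y)) powr \<alpha>"

definition ff :: "real \<Rightarrow> real \<Rightarrow> real \<Rightarrow> real \<Rightarrow> real \<Rightarrow> complex" where
  "ff \<alpha> R1 R2 x y = (ellipse_deriv R1 R2 x - ellipse_deriv R1 R2 (x - y)) /
      complex_of_real (cmod (ellipse R1 R2 x - ellipse R1 R2 (x - y)) powr \<alpha>)"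

lemma hh_ge: assumes "0 < R1" "0 < R2"
  shows "min R1 R2 \<le> sqrt (R1^2 * sin u^2 + R2^2 * cos u^2)"
proof -
  have "(min R1 R2)^2 = (min R1 R2)^2 * (sin u^2 + cos u^2)" by simp
  also have "\<dots> = (min R1 R2)^2 * sin u^2 + (min R1 R2)^2 * cos u^2" by (rule distrib_left)
  also have "\<dots> \<le> R1^2 * sin u^2 + R2^2 * cos u^2"
  proof (rule add_mono)
    have "(min R1 R2)^2 \<le> R1^2" using assms by (intro power_mono) auto
    then show "(min R1 R2)^2 * sin u^2 \<le> R1^2 * sin u^2" by (rule mult_right_mono) simp
    have "(min R1 R2)^2 \<le> R2^2" using assms by (intro power_mono) auto
    then show "(min R1 R2)^2 * cos u^2 \<le> R2^2 * cos u^2" by (rule mult_right_mono) simp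
  qed
  finally show ?thesis using assms by (intro real_le_rsqrt) auto
qed

lemma hh2_le: "sqrt (R1^2 * cos u^2 + R2^2 * sin u^2) \<le> sqrt (R1^2 + R2^2)"
proof -
  have "R1^2 * cos u^2 + R2^2 * sin u^2 \<le> R1^2 * 1 + R2^2 * 1"
    by (intro add_mono mult_left_mono) (auto simp: abs_square_le_1)
  then show ?thesis by simp
qed

lemma sin_y_bound: "\<bar>sin (y::real)\<bar> \<le> 2 * \<bar>sin (y/2)\<bar> * 1"
proof -
  have "sin y = 2 * sin (y/2) * cos (y/2)" using sin_double[of "y/2"] by simp
  then have "\<bar>sin y\<bar> = 2 * \<bar>sin (y/2)\<bar> * \<bar>cos (y/2)\<bar>" by (simp add: abs_mult)
  also have "\<dots> \<le> 2 * \<bar>sin (y/2)\<bar> * 1" by (intro mult_left_mono) auto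
  finally show ?thesis .
qed

lemma gg_bound:
  assumes "0 < \<alpha>" "\<alpha> < 2" "0 < R1" "0 < R2" "0 \<le> y" "y \<le> 2 * pi"
  shows "\<bar>gg \<alpha> R1 R2 x y\<bar> \<le> 2 * 1 * (2 * min R1 R2) powr (-\<alpha>) * W \<alpha> y"
proof -
  have s0: "0 \<le> sin (y/2)" using assms by (intro sin_ge_zero) auto
  have Wn: "0 \<le> 2 * 1 * (2 * min R1 R2) powr (-\<alpha>) * W \<alpha> y"
    using W_ge1[OF assms(5,6), of \<alpha>] by (intro mult_nonneg_nonneg) auto
  show ?thesis
  proof (cases "sin (y/2) = 0")
    case True
    then have "sin y = 0" using sin_double[of "y/2"] by simp
    then show ?thesis using Wn by (simp add: gg_def)
  next
    case False
    then have sp: "0 < sin (y/2)" using s0 by simp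
    have yy: "0 < y" "y < 2 * pi"
    proof -
      show "0 < y" using False assms by (cases "y = 0") auto
      show "y < 2 * pi" using False assms by (cases "y = 2 * pi") auto
    qed
    have "\<bar>gg \<alpha> R1 R2 x y\<bar> = \<bar>sin y\<bar> / cmod (ellipse R1 R2 x - ellipse R1 R2 (x - y)) powr \<alpha>"
      by (simp add: gg_def abs_div)
    also have "\<dots> \<le> 2 * 1 * (2 * min R1 R2) powr (-\<alpha>) * sin (y/2) powr (1-\<alpha>)"
    proof (rule quotient_bound)
      show "\<bar>sin y\<bar> \<le> 2 * sin (y/2) * 1" using sin_y_bound[of y] s0 by simp
      show "2 * sin (y/2) * min R1 R2 \<le> cmod (ellipse R1 R2 x - ellipse R1 R2 (x - y))"
        unfolding cmod_chord using hh_ge[OF assms(3,4), of "x - y/2"] s0 by (simp add: mult_left_mono)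
    qed (use sp assms in auto)
    also have "\<dots> \<le> 2 * 1 * (2 * min R1 R2) powr (-\<alpha>) * W \<alpha> y"
      using spow_le_W[OF assms(1,2) yy] by (intro mult_left_mono) auto
    finally show ?thesis .
  qed
qed

lemma ff_bound:
  assumes "0 < \<alpha>" "\<alpha> < 2" "0 < R1" "0 < R2" "0 \<le> y" "y \<le> 2 * pi"
  shows "cmod (ff \<alpha> R1 R2 x y) \<le> 2 * sqrt (R1^2 + R2^2) * (2 * min R1 R2) powr (-\<alpha>) * W \<alpha> y"
proof -
  have s0: "0 \<le> sin (y/2)" using assms by (intro sin_ge_zero) auto
  have Wn: "0 \<le> 2 * sqrt (R1^2 + R2^2) * (2 * min R1 R2) powr (-\<alpha>) * W \<alpha> y"
    using W_ge1[OF assms(5,6), of \<alpha>] by (intro mult_nonneg_nonneg) auto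
  have num: "cmod (ellipse_deriv R1 R2 x - ellipse_deriv R1 R2 (x - y)) \<le> 2 * sin (y/2) * sqrt (R1^2 + R2^2)"
    unfolding cmod_deriv_chord using hh2_le[of R1 "x - y/2" R2] s0 by (simp add: mult_left_mono)
  show ?thesis
  proof (cases "sin (y/2) = 0")
    case True
    then have "ellipse_deriv R1 R2 x - ellipse_deriv R1 R2 (x - y) = 0" using num by simp
    then show ?thesis using Wn by (simp add: ff_def)
  next
    case False
    then have sp: "0 < sin (y/2)" using s0 by simp
    have yy: "0 < y" "y < 2 * pi"
    proof -
      show "0 < y" using False assms by (cases "y = 0") auto
      show "y < 2 * pi" using False assms by (cases "y = 2 * pi") auto
    qed
    have "cmod (ff \<alpha> R1 R2 x y) = cmod (ellipse_deriv R1 R2 x - ellipse_deriv R1 R2 (x - y)) / cmod (ellipse R1 R2 x - ellipse R1 R2 (x - y)) powr \<alpha>"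
      by (simp add: ff_def norm_divide)
    also have "\<dots> \<le> 2 * sqrt (R1^2 + R2^2) * (2 * min R1 R2) powr (-\<alpha>) * sin (y/2) powr (1-\<alpha>)"
    proof (rule quotient_bound)
      show "cmod (ellipse_deriv R1 R2 x - ellipse_deriv R1 R2 (x - y)) \<le> 2 * sin (y/2) * sqrt (R1^2 + R2^2)"
        by (rule num)
      show "2 * sin (y/2) * min R1 R2 \<le> cmod (ellipse R1 R2 x - ellipse R1 R2 (x - y))"
        unfolding cmod_chord using hh_ge[OF assms(3,4), of "x - y/2"] s0 by (simp add: mult_left_mono)
    qed (use sp assms in auto)
    also have "\<dots> \<le> 2 * sqrt (R1^2 + R2^2) * (2 * min R1 R2) powr (-\<alpha>) * W \<alpha> y"
      using spow_le_W[OF assms(1,2) yy] by (intro mult_left_mono) auto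
    finally show ?thesis .
  qed
qed

lemma W_abs_int: assumes "0 < \<alpha>" "\<alpha> < 2" shows "W \<alpha> absolutely_integrable_on {0..2*pi}"
  using W_integrable[OF assms] W_ge1 by (intro nonnegative_absolutely_integrable_1) (auto intro: order_trans[OF zero_le_one])

lemma borel_to_lebesgue_on:
  "f \<in> borel_measurable borel \<Longrightarrow> f \<in> borel_measurable (lebesgue_on S)"
  by (simp add: measurable_completion measurable_restrict_space1)

lemma ff_meas: "ff \<alpha> R1 R2 x \<in> borel_measurable (lebesgue_on S)"
proof (rule borel_to_lebesgue_on)
  show "ff \<alpha> R1 R2 x \<in> borel_measurable borel"
    unfolding ff_def ellipse_alt ellipse_deriv_alt by measurable
qed

lemma gg_meas: "gg \<alpha> R1 R2 x \<in> borel_measurable (lebesgue_on S)"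
proof (rule borel_to_lebesgue_on)
  show "gg \<alpha> R1 R2 x \<in> borel_measurable borel"
    unfolding gg_def ellipse_alt by measurable
qed

lemma ff_abs_int:
  assumes "0 < \<alpha>" "\<alpha> < 2" "0 < R1" "0 < R2"
  shows "ff \<alpha> R1 R2 x absolutely_integrable_on {0..2*pi}"
proof (rule measurable_bounded_by_integrable_imp_absolutely_integrable)
  show "ff \<alpha> R1 R2 x \<in> borel_measurable (lebesgue_on {0..2*pi})" by (rule ff_meas)
  show "(\<lambda>y. 2 * sqrt (R1^2 + R2^2) * (2 * min R1 R2) powr (-\<alpha>) * W \<alpha> y) integrable_on {0..2*pi}"
    using integrable_on_cmult_left[OF W_integrable[OF assms(1,2)], of "2 * sqrt (R1^2 + R2^2) * (2 * min R1 R2) powr (-\<alpha>)"]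
    by simp
  show "\<And>y. y \<in> {0..2*pi} \<Longrightarrow> norm (ff \<alpha> R1 R2 x y) \<le> 2 * sqrt (R1^2 + R2^2) * (2 * min R1 R2) powr (-\<alpha>) * W \<alpha> y"
    using ff_bound[OF assms] by auto
qed auto

lemma gg_abs_int:
  assumes "0 < \<alpha>" "\<alpha> < 2" "0 < R1" "0 < R2"
  shows "gg \<alpha> R1 R2 x absolutely_integrable_on {0..2*pi}"
proof (rule measurable_bounded_by_integrable_imp_absolutely_integrable)
  show "gg \<alpha> R1 R2 x \<in> borel_measurable (lebesgue_on {0..2*pi})" by (rule gg_meas)
  show "(\<lambda>y. 2 * 1 * (2 * min R1 R2) powr (-\<alpha>) * W \<alpha> y) integrable_on {0..2*pi}"
    using integrable_on_cmult_left[OF W_integrable[OF assms(1,2)], of "2 * 1 * (2 * min R1 R2) powr (-\<alpha>)"]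
    by simp
  show "\<And>y. y \<in> {0..2*pi} \<Longrightarrow> norm (gg \<alpha> R1 R2 x y) \<le> 2 * 1 * (2 * min R1 R2) powr (-\<alpha>) * W \<alpha> y"
    using gg_bound[OF assms] by auto
qed auto

lemma inner_ff: "inner (ff \<alpha> R1 R2 x y) (perp (ellipse_deriv R1 R2 x)) = R1 * R2 * gg \<alpha> R1 R2 x y"
proof -
  have "ff \<alpha> R1 R2 x y = inverse (cmod (ellipse R1 R2 x - ellipse R1 R2 (x - y)) powr \<alpha>) *\<^sub>R
          (ellipse_deriv R1 R2 x - ellipse_deriv R1 R2 (x - y))"
    by (simp add: ff_def scaleR_conv_of_real divide_inverse_commute of_real_inverse)
  then show ?thesis
    by (simp add: inner_num gg_def divide_inverse mult_ac)
qed

lemma lhs_reduce: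
  assumes "0 < \<alpha>" "\<alpha> < 2" "0 < R1" "0 < R2"
  shows "inner (patch_velocity \<alpha> \<theta>1 \<theta>2 (ellipse R1 R2) (ellipse_deriv R1 R2) x) (perp (ellipse_deriv R1 R2 x))
       = c_alpha \<alpha> \<theta>1 \<theta>2 * (R1 * R2 * integral {0..2*pi} (gg \<alpha> R1 R2 x))"
proof -
  let ?v = "perp (ellipse_deriv R1 R2 x)"
  have pv: "patch_velocity \<alpha> \<theta>1 \<theta>2 (ellipse R1 R2) (ellipse_deriv R1 R2) x
        = c_alpha \<alpha> \<theta>1 \<theta>2 *\<^sub>R integral {0..2*pi} (ff \<alpha> R1 R2 x)"
  proof -
    have "ff \<alpha> R1 R2 x = (\<lambda>y. (ellipse_deriv R1 R2 x - ellipse_deriv R1 R2 (x - y)) /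
      complex_of_real (cmod (ellipse R1 R2 x - ellipse R1 R2 (x - y)) powr \<alpha>))"
      by (rule ext) (simp add: ff_def)
    then show ?thesis by (simp add: patch_velocity_def scaleR_conv_of_real)
  qed
  have int: "ff \<alpha> R1 R2 x integrable_on {0..2*pi}"
    using ff_abs_int[OF assms] set_lebesgue_integral_eq_integral(1) by blast
  have "inner (integral {0..2*pi} (ff \<alpha> R1 R2 x)) ?v = integral {0..2*pi} ((\<lambda>w. inner w ?v) \<circ> ff \<alpha> R1 R2 x)"
    using integral_linear[OF int bounded_linear_inner_left[of ?v]] by simp
  also have "\<dots> = integral {0..2*pi} (\<lambda>y. R1 * R2 * gg \<alpha> R1 R2 x y)"
    by (simp add: o_def inner_ff)
  also have "\<dots> = R1 * R2 * integral {0..2*pi} (gg \<alpha> R1 R2 x)"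
    by simp
  finally show ?thesis unfolding pv by simp
qed

definition hh :: "real \<Rightarrow> real \<Rightarrow> real \<Rightarrow> real" where
  "hh R1 R2 u = R1^2 * sin u^2 + R2^2 * cos u^2"

definition PP :: "real \<Rightarrow> real \<Rightarrow> real \<Rightarrow> real \<Rightarrow> real" where
  "PP \<alpha> R1 R2 u = hh R1 R2 u powr (-\<alpha>/2)"

definition ss :: "real \<Rightarrow> real \<Rightarrow> real" where
  "ss \<alpha> y = sin y / (2 * \<bar>sin (y/2)\<bar>) powr \<alpha>"

lemma hh_pos: assumes "0 < R1" "0 < R2" shows "0 < hh R1 R2 u"
proof -
  have "min R1 R2 \<le> sqrt (hh R1 R2 u)" using hh_ge[OF assms] by (simp add: hh_def)
  moreover have "0 < min R1 R2" using assms by simp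
  ultimately have "0 < sqrt (hh R1 R2 u)" by linarith
  then show ?thesis by simp
qed

lemma hh_periodic: "hh R1 R2 (u + pi) = hh R1 R2 u"
  by (simp add: hh_def)

lemma hh_reflect: "hh R1 R2 (pi - u) = hh R1 R2 u"
  by (simp add: hh_def)

lemma gg_factor:
  assumes "0 < R1" "0 < R2"
  shows "gg \<alpha> R1 R2 x y = ss \<alpha> y * PP \<alpha> R1 R2 (x - y/2)"
proof -
  let ?h = "hh R1 R2 (x - y/2)"
  have hp: "0 < ?h" by (rule hh_pos[OF assms])
  have c: "cmod (ellipse R1 R2 x - ellipse R1 R2 (x - y)) = (2 * \<bar>sin (y/2)\<bar>) * sqrt ?h"
    unfolding cmod_chord hh_def by simp
  have "cmod (ellipse R1 R2 x - ellipse R1 R2 (x - y)) powr \<alpha> = (2 * \<bar>sin (y/2)\<bar>) powr \<alpha> * sqrt ?h powr \<alpha>"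
    unfolding c by (rule powr_mult; simp)
  also have "sqrt ?h powr \<alpha> = ?h powr (\<alpha>/2)"
  proof -
    have "sqrt ?h = ?h powr (1/2)" using hp by (simp add: powr_half_sqrt)
    then have "sqrt ?h powr \<alpha> = (?h powr (1/2)) powr \<alpha>" by simp
    also have "\<dots> = ?h powr (1/2 * \<alpha>)" by (rule powr_powr)
    finally show ?thesis by simp
  qed
  finally have e: "cmod (ellipse R1 R2 x - ellipse R1 R2 (x - y)) powr \<alpha> = (2 * \<bar>sin (y/2)\<bar>) powr \<alpha> * ?h powr (\<alpha>/2)" .
  have p: "PP \<alpha> R1 R2 (x - y/2) = inverse (?h powr (\<alpha>/2))"
    unfolding PP_def by (metis powr_minus minus_divide_left)
  have "gg \<alpha> R1 R2 x y = sin y / ((2 * \<bar>sin (y/2)\<bar>) powr \<alpha> * ?h powr (\<alpha>/2))"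
    unfolding gg_def e by (rule refl)
  also have "\<dots> = sin y / (2 * \<bar>sin (y/2)\<bar>) powr \<alpha> * inverse (?h powr (\<alpha>/2))"
    by (simp only: divide_inverse inverse_mult_distrib mult.assoc)
  finally show ?thesis unfolding ss_def p .
qed

lemma PP_cont: assumes "0 < R1" "0 < R2" shows "continuous_on S (PP \<alpha> R1 R2)"
proof -
  have hp: "R1^2 * sin u^2 + R2^2 * cos u^2 \<noteq> 0" for u
    using hh_pos[OF assms, of u] unfolding hh_def by simp
  have "continuous_on S (\<lambda>u. hh R1 R2 u powr (-\<alpha>/2))"
    unfolding hh_def by (intro continuous_intros) (use hp in auto)
  then show ?thesis unfolding PP_def by simp
qed

lemma PP_periodic: "PP \<alpha> R1 R2 (u + pi) = PP \<alpha> R1 R2 u"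
  by (simp add: PP_def hh_periodic)

lemma PP_reflect: "PP \<alpha> R1 R2 (pi - u) = PP \<alpha> R1 R2 u"
  by (simp add: PP_def hh_reflect)

lemma integral_periodic_shift:
  fixes F :: "real \<Rightarrow> real"
  assumes cont: "continuous_on UNIV F" and per: "\<And>u. F (u + pi) = F u" and c: "0 \<le> c" "c \<le> pi"
  shows "integral {-c..pi-c} F = integral {0..pi} F"
proof -
  have int: "F integrable_on {a..b}" for a b
    by (rule integrable_continuous_real) (rule continuous_on_subset[OF cont], simp)
  have "integral {-c..pi-c} F = integral {-c..0} F + integral {0..pi-c} F"
    using Henstock_Kurzweil_Integration.integral_combine[where f=F and a="-c" and c=0 and b="pi-c"] c int by simp
  also have "integral {-c..0} F = integral {(pi-c) - pi..pi - pi} (\<lambda>x. F (x + pi))"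
    by (simp add: per)
  also have "\<dots> = integral {pi-c..pi} F" by (rule integral_shift_real_ivl)
  finally have "integral {-c..pi-c} F = integral {0..pi-c} F + integral {pi-c..pi} F" by simp
  also have "\<dots> = integral {0..pi} F"
    using Henstock_Kurzweil_Integration.integral_combine[where f=F and a=0 and c="pi-c" and b=pi] c int by simp
  finally show ?thesis .
qed

definition AA :: "real \<Rightarrow> real \<Rightarrow> real \<Rightarrow> real" where
  "AA \<alpha> R1 R2 = integral {0..pi} (\<lambda>u. PP \<alpha> R1 R2 u * cos (4 * u))"

lemma sin4_periodic: "sin (4 * (u + pi) + d) = sin (4 * u + d)"
proof -
  have "4 * (u + pi) + d = (4 * u + d + 2 * pi) + 2 * pi" by simp
  then show ?thesis by (simp only: sin_periodic)
qed

lemma X_formula: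
  assumes "0 < R1" "0 < R2" "0 \<le> c" "c \<le> pi"
  shows "integral {0..pi} (\<lambda>x. PP \<alpha> R1 R2 (x - c) * sin (4 * x)) = sin (4 * c) * AA \<alpha> R1 R2"
proof -
  have cP: "continuous_on UNIV (PP \<alpha> R1 R2)" by (rule PP_cont[OF assms(1,2)])
  have "integral {0..pi} (\<lambda>x. PP \<alpha> R1 R2 (x - c) * sin (4 * x))
      = integral {0 - c..pi - c} (\<lambda>x. PP \<alpha> R1 R2 ((x + c) - c) * sin (4 * (x + c)))"
    by (rule integral_shift_real_ivl[symmetric])
  also have "\<dots> = integral {-c..pi-c} (\<lambda>u. PP \<alpha> R1 R2 u * sin (4 * u + 4 * c))"
    by (simp add: algebra_simps)
  also have "\<dots> = integral {0..pi} (\<lambda>u. PP \<alpha> R1 R2 u * sin (4 * u + 4 * c))"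
  proof (rule integral_periodic_shift)
    show "continuous_on UNIV (\<lambda>u. PP \<alpha> R1 R2 u * sin (4 * u + 4 * c))"
      by (intro continuous_intros cP)
    show "PP \<alpha> R1 R2 (u + pi) * sin (4 * (u + pi) + 4 * c) = PP \<alpha> R1 R2 u * sin (4 * u + 4 * c)" for u
      by (simp only: PP_periodic sin4_periodic)
  qed (use assms in auto)
  also have "\<dots> = integral {0..pi} (\<lambda>u. cos (4 * c) * (PP \<alpha> R1 R2 u * sin (4 * u)) + sin (4 * c) * (PP \<alpha> R1 R2 u * cos (4 * u)))"
    by (simp add: sin_add algebra_simps)
  also have "\<dots> = cos (4 * c) * integral {0..pi} (\<lambda>u. PP \<alpha> R1 R2 u * sin (4 * u)) + sin (4 * c) * AA \<alpha> R1 R2"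
  proof -
    have i1: "(\<lambda>u. PP \<alpha> R1 R2 u * sin (4 * u)) integrable_on {0..pi}"
      by (intro integrable_continuous_real continuous_intros continuous_on_subset[OF cP]) auto
    have i2: "(\<lambda>u. PP \<alpha> R1 R2 u * cos (4 * u)) integrable_on {0..pi}"
      by (intro integrable_continuous_real continuous_intros continuous_on_subset[OF cP]) auto
    show ?thesis unfolding AA_def
      using integral_add[OF integrable_on_cmult_left[OF i1, of "cos (4 * c)"] integrable_on_cmult_left[OF i2, of "sin (4 * c)"]]
      by simp
  qed
  also have "integral {0..pi} (\<lambda>u. PP \<alpha> R1 R2 u * sin (4 * u)) = 0"
  proof -
    let ?f = "\<lambda>u. PP \<alpha> R1 R2 u * sin (4 * u)"
    have i1: "?f integrable_on {0..pi}"
      by (intro integrable_continuous_real continuous_intros continuous_on_subset[OF cP]) auto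
    have "integral {0..pi} (\<lambda>u. ?f (0 + pi - u)) = integral {0..pi} ?f"
      by (rule integral_reflect_ab[OF i1])
    moreover have "(\<lambda>u. ?f (0 + pi - u)) = (\<lambda>u. - ?f u)"
    proof
      fix u
      have "sin (4 * (pi - u)) = - sin (4 * u)"
      proof -
        have "4 * (pi - u) = - (4 * u) + 2 * pi + 2 * pi" by simp
        then show ?thesis by (simp only: sin_periodic sin_minus)
      qed
      then show "?f (0 + pi - u) = - ?f u" by (simp add: PP_reflect)
    qed
    ultimately have "integral {0..pi} (\<lambda>u. - ?f u) = integral {0..pi} ?f" by simp
    then show ?thesis by simp
  qed
  finally show ?thesis by simp
qed

lemma abs_to_lborel:
  fixes f :: "real \<Rightarrow> real"
  assumes "f absolutely_integrable_on S" "(\<lambda>x. indicator S x *\<^sub>R f x) \<in> borel_measurable borel"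
  shows "set_integrable lborel S f"
  using assms integrable_completion[of "\<lambda>x. indicator S x *\<^sub>R f x" lborel]
  unfolding set_integrable_def by simp

lemma gg_prod_meas:
  "(\<lambda>(x,y). indicator ({0..pi} \<times> {0..2*pi}) (x,y) * (gg \<alpha> R1 R2 x y * sin (4 * x)))
     \<in> borel_measurable (lborel \<Otimes>\<^sub>M lborel)"
  unfolding gg_def ellipse_alt by measurable

lemma gg_set_int:
  assumes "0 < \<alpha>" "\<alpha> < 2" "0 < R1" "0 < R2"
  shows "set_integrable lborel {0..2*pi} (gg \<alpha> R1 R2 x)"
proof (rule abs_to_lborel[OF gg_abs_int[OF assms]])
  show "(\<lambda>y. indicator {0..2*pi} y *\<^sub>R gg \<alpha> R1 R2 x y) \<in> borel_measurable borel"
    unfolding gg_def ellipse_alt by measurable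
qed

lemma W_set_int:
  assumes "0 < \<alpha>" "\<alpha> < 2"
  shows "set_integrable lborel {0..2*pi} (W \<alpha>)"
proof (rule abs_to_lborel[OF W_abs_int[OF assms]])
  show "(\<lambda>y. indicator {0..2*pi} y *\<^sub>R W \<alpha> y) \<in> borel_measurable borel"
    unfolding W_def by measurable
qed

lemma fubini_identity:
  assumes "0 < \<alpha>" "\<alpha> < 2" "0 < R1" "0 < R2"
  shows "integral {0..pi} (\<lambda>x. sin (4 * x) * integral {0..2*pi} (gg \<alpha> R1 R2 x))
       = integral {0..2*pi} (\<lambda>y. ss \<alpha> y * sin (2 * y) * AA \<alpha> R1 R2)"
proof -
  define G where "G = (\<lambda>x y. indicator ({0..pi} \<times> {0..2*pi}) (x,y) * (gg \<alpha> R1 R2 x y * sin (4 * x)))"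
  define Cg where "Cg = 2 * 1 * (2 * min R1 R2) powr (-\<alpha>)"
  define B where "B = (\<lambda>y. indicator {0..2*pi} y * (Cg * W \<alpha> y))"
  have Gm[measurable]: "(\<lambda>(x,y). G x y) \<in> borel_measurable (lborel \<Otimes>\<^sub>M lborel)"
    unfolding G_def using gg_prod_meas by simp
  have Cg0: "0 \<le> Cg" unfolding Cg_def by simp
  have Bint: "integrable lborel B"
    using integrable_mult_right[OF W_set_int[OF assms(1,2), unfolded set_integrable_def], of Cg]
    unfolding B_def by (simp add: mult_ac)
  have Bnn: "0 \<le> B y" for y
    unfolding B_def using W_ge1[of y \<alpha>] Cg0 by (auto simp: indicator_def)
  have Gbound: "\<bar>G x y\<bar> \<le> B y" for x y
  proof (cases "x \<in> {0..pi} \<and> y \<in> {0..2*pi}")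
    case True
    then have "\<bar>G x y\<bar> = \<bar>gg \<alpha> R1 R2 x y\<bar> * \<bar>sin (4 * x)\<bar>" by (simp add: G_def abs_mult)
    also have "\<dots> \<le> \<bar>gg \<alpha> R1 R2 x y\<bar> * 1" by (intro mult_left_mono) auto
    also have "\<dots> \<le> Cg * W \<alpha> y" using gg_bound[OF assms, of y x] True unfolding Cg_def by simp
    finally show ?thesis using True by (simp add: B_def)
  next
    case False
    then show ?thesis using Bnn[of y] by (auto simp: G_def indicator_def)
  qed
  have yint: "integrable lborel (\<lambda>y. G x y)" for x
  proof (rule Bochner_Integration.integrable_bound[OF Bint])
    show "(\<lambda>y. G x y) \<in> borel_measurable lborel" by measurable
    show "AE y in lborel. norm (G x y) \<le> norm (B y)" using Gbound Bnn by (auto intro!: AE_I2 intro: order_trans)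
  qed
  define C1 where "C1 = (LINT y|lborel. B y)"
  have xint: "integrable lborel (\<lambda>x. LINT y|lborel. norm (G x y))"
  proof (rule Bochner_Integration.integrable_bound)
    show "integrable lborel (\<lambda>x. indicator {0..pi} x * C1)"
      by (intro integrable_mult_left integrable_real_indicator) auto
    show "(\<lambda>x. LINT y|lborel. norm (G x y)) \<in> borel_measurable lborel" by measurable
    show "AE x in lborel. norm (LINT y|lborel. norm (G x y)) \<le> norm (indicator {0..pi} x * C1)"
    proof (intro AE_I2)
      fix x
      have nn: "0 \<le> (LINT y|lborel. norm (G x y))" by (intro integral_nonneg_AE) auto
      show "norm (LINT y|lborel. norm (G x y)) \<le> norm (indicator {0..pi} x * C1)"
      proof (cases "x \<in> {0..pi}")
        case True
        have "(LINT y|lborel. norm (G x y)) \<le> C1" unfolding C1_def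
          using Gbound by (intro integral_mono integrable_norm yint Bint) auto
        then show ?thesis using True nn by simp
      next
        case False
        then have "(\<lambda>y. norm (G x y)) = (\<lambda>y. 0)" by (auto simp: G_def)
        then show ?thesis by simp
      qed
    qed
  qed
  have prodint: "integrable (lborel \<Otimes>\<^sub>M lborel) (\<lambda>(x,y). G x y)"
    by (rule lborel_pair.Fubini_integrable) (use xint yint in auto)
  have fub: "(LINT y|lborel. LINT x|lborel. G x y) = (LINT x|lborel. LINT y|lborel. G x y)"
    by (rule lborel_pair.Fubini_integral[OF prodint])
  have left: "(LINT y|lborel. G x y) = indicator {0..pi} x * (sin (4 * x) * integral {0..2*pi} (gg \<alpha> R1 R2 x))" for x
  proof -
    have "(LINT y|lborel. G x y) = (LINT y|lborel. indicator {0..pi} x * sin (4 * x) * (indicator {0..2*pi} y *\<^sub>R gg \<alpha> R1 R2 x y))"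
      by (intro Bochner_Integration.integral_cong) (auto simp: G_def indicator_times)
    also have "\<dots> = indicator {0..pi} x * sin (4 * x) * (LINT y:{0..2*pi}|lborel. gg \<alpha> R1 R2 x y)"
      unfolding set_lebesgue_integral_def by simp
    also have "(LINT y:{0..2*pi}|lborel. gg \<alpha> R1 R2 x y) = integral {0..2*pi} (gg \<alpha> R1 R2 x)"
      by (rule set_borel_integral_eq_integral(2)[OF gg_set_int[OF assms]])
    finally show ?thesis by simp
  qed
  have right: "(LINT x|lborel. G x y) = indicator {0..2*pi} y * (ss \<alpha> y * sin (2 * y) * AA \<alpha> R1 R2)" for y
  proof -
    have cP: "continuous_on UNIV (PP \<alpha> R1 R2)" by (rule PP_cont[OF assms(3,4)])
    have "(LINT x|lborel. G x y) = (LINT x|lborel. indicator {0..2*pi} y * ss \<alpha> y * (indicator {0..pi} x *\<^sub>R (PP \<alpha> R1 R2 (x - y/2) * sin (4 * x))))"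
      by (intro Bochner_Integration.integral_cong) (auto simp: G_def indicator_times gg_factor[OF assms(3,4)])
    also have "\<dots> = indicator {0..2*pi} y * ss \<alpha> y * (LINT x:{0..pi}|lborel. PP \<alpha> R1 R2 (x - y/2) * sin (4 * x))"
      unfolding set_lebesgue_integral_def by simp
    also have "(LINT x:{0..pi}|lborel. PP \<alpha> R1 R2 (x - y/2) * sin (4 * x)) = integral {0..pi} (\<lambda>x. PP \<alpha> R1 R2 (x - y/2) * sin (4 * x))"
    proof (rule set_borel_integral_eq_integral(2))
      show "set_integrable lborel {0..pi} (\<lambda>x. PP \<alpha> R1 R2 (x - y/2) * sin (4 * x))"
        unfolding set_integrable_def
        by (intro borel_integrable_compact continuous_intros continuous_on_compose2[OF cP]) auto
    qed
    finally have e: "(LINT x|lborel. G x y) = indicator {0..2*pi} y * ss \<alpha> y * integral {0..pi} (\<lambda>x. PP \<alpha> R1 R2 (x - y/2) * sin (4 * x))" .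
    show ?thesis
    proof (cases "y \<in> {0..2*pi}")
      case True
      then have "integral {0..pi} (\<lambda>x. PP \<alpha> R1 R2 (x - y/2) * sin (4 * x)) = sin (4 * (y/2)) * AA \<alpha> R1 R2"
        by (intro X_formula assms) auto
      then show ?thesis using e True by simp
    next
      case False
      then show ?thesis using e by simp
    qed
  qed
  have i1: "integrable lborel (\<lambda>x. LINT y|lborel. G x y)"
    using lborel_pair.integrable_fst[OF prodint] by simp
  have i2: "integrable lborel (\<lambda>y. LINT x|lborel. G x y)"
    using lborel_pair.integrable_snd[OF prodint] by simp
  have "(LINT x|lborel. LINT y|lborel. G x y) = (LINT x:{0..pi}|lborel. sin (4 * x) * integral {0..2*pi} (gg \<alpha> R1 R2 x))"
    unfolding set_lebesgue_integral_def left by simp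
  also have "\<dots> = integral {0..pi} (\<lambda>x. sin (4 * x) * integral {0..2*pi} (gg \<alpha> R1 R2 x))"
    by (rule set_borel_integral_eq_integral(2)) (use i1 in \<open>simp add: set_integrable_def left\<close>)
  finally have L: "(LINT x|lborel. LINT y|lborel. G x y) = integral {0..pi} (\<lambda>x. sin (4 * x) * integral {0..2*pi} (gg \<alpha> R1 R2 x))" .
  have "(LINT y|lborel. LINT x|lborel. G x y) = (LINT y:{0..2*pi}|lborel. ss \<alpha> y * sin (2 * y) * AA \<alpha> R1 R2)"
    unfolding set_lebesgue_integral_def right by simp
  also have "\<dots> = integral {0..2*pi} (\<lambda>y. ss \<alpha> y * sin (2 * y) * AA \<alpha> R1 R2)"
    by (rule set_borel_integral_eq_integral(2)) (use i2 in \<open>simp add: set_integrable_def right\<close>)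
  finally have R: "(LINT y|lborel. LINT x|lborel. G x y) = integral {0..2*pi} (\<lambda>y. ss \<alpha> y * sin (2 * y) * AA \<alpha> R1 R2)" .
  show ?thesis using fub L R by simp
qed

lemma integral_pos_lemma:
  fixes f :: "real \<Rightarrow> real"
  assumes fi: "f integrable_on {a..b}" and nn: "\<And>x. x \<in> {a..b} \<Longrightarrow> 0 \<le> f x"
    and cd: "a \<le> c" "c < d" "d \<le> b" and cont: "continuous_on {c..d} f"
    and pos: "\<And>x. x \<in> {c..d} \<Longrightarrow> 0 < f x"
  shows "0 < integral {a..b} f"
proof -
  obtain x0 where x0: "x0 \<in> {c..d}" "\<And>y. y \<in> {c..d} \<Longrightarrow> f x0 \<le> f y"
    using continuous_attains_inf[of "{c..d}" f] cont cd by auto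
  have m0: "0 < f x0" using pos x0 by auto
  have fi2: "f integrable_on {c..d}" by (rule integrable_subinterval_real[OF fi]) (use cd in auto)
  have "integral {c..d} (\<lambda>x. f x0) \<le> integral {c..d} f"
    by (rule integral_le) (use fi2 x0 in auto)
  moreover have "integral {c..d} (\<lambda>x. f x0) = (d - c) * f x0" using cd by simp
  moreover have "0 < (d - c) * f x0" using cd m0 by simp
  moreover have "integral {c..d} f \<le> integral {a..b} f"
    by (rule integral_subset_le) (use fi2 fi nn cd in auto)
  ultimately show ?thesis by linarith
qed

lemma split_reflect:
  fixes f :: "real \<Rightarrow> real"
  assumes fi: "f integrable_on {a..b}" and ab: "a \<le> b"
  shows "integral {a..b} f = integral {a..(a+b)/2} (\<lambda>u. f u + f (a + b - u))"
proof -
  define m where "m = (a+b)/2"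
  have am: "a \<le> m" "m \<le> b" using ab by (auto simp: m_def)
  have i1: "f integrable_on {a..m}" by (rule integrable_subinterval_real[OF fi]) (use am in auto)
  have i2: "f integrable_on {m..b}" by (rule integrable_subinterval_real[OF fi]) (use am in auto)
  have "((\<lambda>x. f (- x)) has_integral integral {m..b} f) {-b..-m}"
    using integrable_integral[OF i2] by simp
  then have "((\<lambda>x. f (- (x + (- (a+b))))) has_integral integral {m..b} f) {-b - (- (a+b))..-m - (-(a+b))}"
    by (rule has_integral_shift_real_ivl)
  moreover have e1: "-b - (- (a+b)) = a" by simp
  moreover have e2: "-m - (-(a+b)) = m" by (simp add: m_def field_simps)
  moreover have e3: "(\<lambda>x. f (- (x + (- (a+b))))) = (\<lambda>x. f (a + b - x))" by (auto simp: algebra_simps)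
  ultimately have h2: "((\<lambda>x. f (a + b - x)) has_integral integral {m..b} f) {a..m}" by metis
  have "integral {a..m} (\<lambda>u. f u + f (a + b - u)) = integral {a..m} f + integral {m..b} f"
    using has_integral_add[OF integrable_integral[OF i1] h2] by (rule integral_unique)
  also have "\<dots> = integral {a..b} f"
    using Henstock_Kurzweil_Integration.integral_combine[where f=f and a=a and c=m and b=b] am fi by simp
  finally show ?thesis unfolding m_def by simp
qed

lemma psi_mono:
  fixes p q \<beta> s c :: real
  assumes "0 < \<beta>" "q \<noteq> 0" "\<bar>q\<bar> < p" "0 \<le> s" "s < c" "c \<le> 1"
  shows "(p + q * s) powr (-\<beta>) + (p - q * s) powr (-\<beta>) < (p + q * c) powr (-\<beta>) + (p - q * c) powr (-\<beta>)"
proof -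
  have bnd: "0 < p + q * t" "0 < p - q * t" if "0 \<le> t" "t \<le> 1" for t
  proof -
    have "\<bar>q * t\<bar> \<le> \<bar>q\<bar>" using that by (simp add: abs_mult mult_left_le)
    then show "0 < p + q * t" "0 < p - q * t" using assms(3) by linarith+
  qed
  let ?psi = "\<lambda>t. (p + q * t) powr (-\<beta>) + (p - q * t) powr (-\<beta>)"
  show ?thesis
  proof (rule DERIV_pos_imp_increasing_open[of s c ?psi, OF assms(5)])
    fix t assume t: "s < t" "t < c"
    then have t01: "0 < t" "t \<le> 1" using assms by auto
    note b = bnd[of t] t01
    let ?d = "(-\<beta>) * (p + q * t) powr (-\<beta> - 1) * q + (-\<beta>) * (p - q * t) powr (-\<beta> - 1) * (- q)"
    have "DERIV ?psi t :> ?d"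
      using b by (auto intro!: derivative_eq_intros DERIV_fun_powr[THEN DERIV_cong] simp: algebra_simps)
    moreover have "0 < ?d"
    proof (cases "q > 0")
      case True
      have "(p + q * t) powr (-\<beta> - 1) < (p - q * t) powr (-\<beta> - 1)"
        using b True assms by (intro powr_less_mono2_neg) auto
      then have "0 < \<beta> * q * ((p - q * t) powr (-\<beta> - 1) - (p + q * t) powr (-\<beta> - 1))"
        using True assms by (intro mult_pos_pos) auto
      then show ?thesis by (simp add: algebra_simps)
    next
      case False
      then have qn: "q < 0" using assms by simp
      have "(p - q * t) powr (-\<beta> - 1) < (p + q * t) powr (-\<beta> - 1)"
        using b qn assms by (intro powr_less_mono2_neg) (auto simp: mult_neg_pos)
      then have "0 < \<beta> * (- q) * ((p + q * t) powr (-\<beta> - 1) - (p - q * t) powr (-\<beta> - 1))"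
        using qn assms by (intro mult_pos_pos) auto
      then show ?thesis by (simp add: algebra_simps)
    qed
    ultimately show "\<exists>y. DERIV ?psi t :> y \<and> 0 < y" by blast
  next
    have bb: "\<forall>t\<in>{s..c}. 0 < p + q * t \<and> 0 < p - q * t" using bnd assms by auto
    show "continuous_on {s..c} ?psi"
      using bb by (intro continuous_intros) auto
  qed
qed

lemma hh_cos2: "hh R1 R2 u = (R1^2 + R2^2)/2 + (R2^2 - R1^2)/2 * cos (2 * u)"
proof -
  have s: "sin u ^ 2 = (1 - cos (2 * u)) / 2" and c: "cos u ^ 2 = (1 + cos (2 * u)) / 2"
    using cos_double_sin[of u] cos_double_cos[of u] by simp_all
  show ?thesis unfolding hh_def s c by (simp add: field_simps)
qed

lemma trig1: "cos (4 * (pi - u)) = cos (4 * u)"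
proof -
  have "cos (4 * (pi - u)) = cos (- (4 * u) + 2 * pi + 2 * pi)" by (rule arg_cong[where f=cos]) simp
  also have "\<dots> = cos (4 * u)" by (simp only: cos_periodic cos_minus)
  finally show ?thesis .
qed

lemma trig2: "cos (4 * (pi/2 - u)) = cos (4 * u)"
proof -
  have "cos (4 * (pi/2 - u)) = cos (- (4 * u) + 2 * pi)" by (rule arg_cong[where f=cos]) simp
  also have "\<dots> = cos (4 * u)" by (simp only: cos_periodic cos_minus)
  finally show ?thesis .
qed

lemma trig3: "cos (2 * (pi/2 - u)) = - cos (2 * u)"
proof -
  have "cos (2 * (pi/2 - u)) = cos (pi - 2 * u)" by (rule arg_cong[where f=cos]) simp
  then show ?thesis by simp
qed

lemma trig4: "cos (4 * (pi/4 - u)) = - cos (4 * u)"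
proof -
  have "cos (4 * (pi/4 - u)) = cos (pi - 4 * u)" by (rule arg_cong[where f=cos]) simp
  then show ?thesis by simp
qed

lemma trig5: "cos (2 * (pi/4 - u)) = sin (2 * u)"
proof -
  have "cos (2 * (pi/4 - u)) = cos (pi/2 - 2 * u)" by (rule arg_cong[where f=cos]) simp
  then show ?thesis by (simp add: cos_diff)
qed

lemma AA_pos:
  assumes "0 < \<alpha>" "0 < R1" "0 < R2" "R1 \<noteq> R2"
  shows "0 < AA \<alpha> R1 R2"
proof -
  define p where "p = (R1^2 + R2^2)/2"
  define q where "q = (R2^2 - R1^2)/2"
  define \<beta> where "\<beta> = \<alpha>/2"
  define psi where "psi = (\<lambda>t. (p + q * t) powr (-\<beta>) + (p - q * t) powr (-\<beta>))"
  have b0: "0 < \<beta>" using assms by (simp add: \<beta>_def)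
  have q0: "q \<noteq> 0"
  proof
    assume "q = 0"
    then have "R1^2 = R2^2" by (simp add: q_def)
    then have "R1 = R2" using assms by (simp add: power2_eq_iff)
    then show False using assms by simp
  qed
  have r1: "0 < R1^2" "0 < R2^2" using assms by simp_all
  have qp: "\<bar>q\<bar> < p"
  proof -
    have "q < p" unfolding p_def q_def using r1 by (intro divide_strict_right_mono) auto
    moreover have "-q < p" unfolding p_def q_def minus_divide_left using r1 by (intro divide_strict_right_mono) auto
    ultimately show ?thesis by (simp add: abs_less_iff)
  qed
  have ex: "-\<alpha>/2 = -\<beta>" by (simp add: \<beta>_def)
  have PPc: "PP \<alpha> R1 R2 v = (p + q * cos (2 * v)) powr (-\<beta>)" for v
    unfolding PP_def hh_cos2 ex p_def q_def by simp
  have PPc': "PP \<alpha> R1 R2 (pi/2 - v) = (p - q * cos (2 * v)) powr (-\<beta>)" for v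
    unfolding PPc trig3 by simp
  have cP: "continuous_on UNIV (PP \<alpha> R1 R2)" by (rule PP_cont[OF assms(2,3)])
  define Q where "Q = (\<lambda>u. PP \<alpha> R1 R2 u * cos (4 * u))"
  define Q1 where "Q1 = (\<lambda>u. Q u + Q (pi - u))"
  define Q2 where "Q2 = (\<lambda>u. Q1 u + Q1 (pi/2 - u))"
  define T where "T = (\<lambda>u. Q2 u + Q2 (pi/4 - u))"
  have cQ: "continuous_on UNIV Q" unfolding Q_def
    by (intro continuous_intros cP)
  have cQ1: "continuous_on UNIV Q1" unfolding Q1_def
    by (intro continuous_intros continuous_on_compose2[OF cQ]) auto
  have cQ2: "continuous_on UNIV Q2" unfolding Q2_def
    by (intro continuous_intros continuous_on_compose2[OF cQ1]) auto
  have cT: "continuous_on UNIV T" unfolding T_def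
    by (intro continuous_intros continuous_on_compose2[OF cQ2]) auto
  have intc: "f integrable_on {a..b}" if "continuous_on UNIV f" for f :: "real \<Rightarrow> real" and a b
    by (rule integrable_continuous_real) (rule continuous_on_subset[OF that], simp)
  have s1: "AA \<alpha> R1 R2 = integral {0..pi/2} Q1"
    using split_reflect[OF intc[OF cQ], of 0 pi] unfolding AA_def Q_def[symmetric] Q1_def by simp
  have s2: "integral {0..pi/2} Q1 = integral {0..pi/4} Q2"
    using split_reflect[OF intc[OF cQ1], of 0 "pi/2"] unfolding Q2_def by simp
  have s3: "integral {0..pi/4} Q2 = integral {0..pi/8} T"
    using split_reflect[OF intc[OF cQ2], of 0 "pi/4"] unfolding T_def by simp
  have Q1v: "Q1 v = 2 * Q v" for v unfolding Q1_def Q_def PP_reflect trig1 by simp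
  have Q2v: "Q2 v = 2 * cos (4 * v) * psi (cos (2 * v))" for v
    unfolding Q2_def Q1v Q_def psi_def PPc' trig2 by (simp add: PPc algebra_simps)
  have Tu: "T u = 2 * cos (4 * u) * (psi (cos (2 * u)) - psi (sin (2 * u)))" for u
    unfolding T_def Q2v trig4 trig5 by (simp add: algebra_simps)
  have pos: "0 < integral {0..pi/8} T"
  proof (rule integral_pos_lemma[where c=0 and d="pi/16"])
    show "T integrable_on {0..pi/8}" by (rule intc[OF cT])
    show "continuous_on {0..pi/16} T" by (rule continuous_on_subset[OF cT]) simp
    show "0 \<le> T x" if x: "x \<in> {0..pi/8}" for x
    proof -
      have c4: "0 \<le> cos (4 * x)" using x by (intro cos_ge_zero) auto
      have s0: "0 \<le> sin (2 * x)" using x by (intro sin_ge_zero) auto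
      have sc: "sin (2 * x) \<le> cos (2 * x)"
      proof -
        have "sin (2 * x) \<le> sin (pi/2 - 2 * x)" using x by (subst sin_mono_le_eq) auto
        then show ?thesis by (simp add: sin_cos_eq)
      qed
      have "psi (sin (2 * x)) \<le> psi (cos (2 * x))"
      proof (cases "sin (2 * x) = cos (2 * x)")
        case True then show ?thesis by simp
      next
        case False
        have "psi (sin (2 * x)) < psi (cos (2 * x))"
          unfolding psi_def by (rule psi_mono[OF b0 q0 qp s0]) (use sc False in auto)
        then show ?thesis by simp
      qed
      then show ?thesis unfolding Tu using c4 by (intro mult_nonneg_nonneg) auto
    qed
    show "0 < T x" if x: "x \<in> {0..pi/16}" for x
    proof -
      have x1: "0 \<le> x" "x \<le> pi/16" using x by auto
      have c4: "0 < cos (4 * x)" by (rule cos_gt_zero_pi) (use x1 pi_gt_zero in linarith)+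
      have s0: "0 \<le> sin (2 * x)" using x by (intro sin_ge_zero) auto
      have sc: "sin (2 * x) < cos (2 * x)"
      proof -
        have "sin (2 * x) < sin (pi/2 - 2 * x)" by (subst sin_mono_less_eq) (use x1 pi_gt_zero in linarith)+
        then show ?thesis by (simp add: sin_cos_eq)
      qed
      have "psi (sin (2 * x)) < psi (cos (2 * x))"
        unfolding psi_def by (rule psi_mono[OF b0 q0 qp s0]) (use sc in auto)
      then show ?thesis unfolding Tu using c4 by (intro mult_pos_pos) auto
    qed
  qed auto
  show ?thesis using s1 s2 s3 pos by simp
qed

lemma ss_eq_gg: "ss \<alpha> = gg \<alpha> 1 1 0"
proof
  fix y
  have "PP \<alpha> 1 1 (0 - y/2) = 1" by (simp add: PP_def hh_def)
  then show "ss \<alpha> y = gg \<alpha> 1 1 0 y" using gg_factor[of 1 1 \<alpha> 0 y] by simp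
qed

lemma T1_abs_int:
  assumes "0 < \<alpha>" "\<alpha> < 2"
  shows "(\<lambda>y. ss \<alpha> y * sin (2 * y)) absolutely_integrable_on {0..2*pi}"
proof (rule measurable_bounded_by_integrable_imp_absolutely_integrable)
  have ai: "ss \<alpha> absolutely_integrable_on {0..2*pi}"
    unfolding ss_eq_gg by (rule gg_abs_int) (use assms in auto)
  show "(\<lambda>y. ss \<alpha> y * sin (2 * y)) \<in> borel_measurable (lebesgue_on {0..2*pi})"
  proof (rule borel_to_lebesgue_on)
    show "(\<lambda>y. ss \<alpha> y * sin (2 * y)) \<in> borel_measurable borel" unfolding ss_def by measurable
  qed
  show "(\<lambda>y. norm (ss \<alpha> y)) integrable_on {0..2*pi}"
    using ai unfolding absolutely_integrable_on_def by simp
  show "norm (ss \<alpha> y * sin (2 * y)) \<le> norm (ss \<alpha> y)" for y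
    by (simp add: abs_mult mult_left_le)
qed auto

lemma T1_reflect: "ss \<alpha> (2 * pi - y) * sin (2 * (2 * pi - y)) = ss \<alpha> y * sin (2 * y)"
proof -
  have a: "sin (2 * (2 * pi - y)) = - sin (2 * y)"
  proof -
    have "sin (2 * (2 * pi - y)) = sin (- (2 * y) + 2 * pi + 2 * pi)" by (rule arg_cong[where f=sin]) simp
    also have "\<dots> = - sin (2 * y)" by (simp only: sin_periodic sin_minus)
    finally show ?thesis .
  qed
  have b: "sin ((2 * pi - y) / 2) = sin (y/2)"
  proof -
    have "sin ((2 * pi - y) / 2) = sin (pi - y/2)" by (rule arg_cong[where f=sin]) (simp add: field_simps)
    then show ?thesis by simp
  qed
  show ?thesis unfolding ss_def a b by simp
qed

lemma V_formula:
  assumes "0 \<le> y" "y \<le> pi"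
  shows "2 * (ss \<alpha> y * sin (2 * y)) + 2 * (ss \<alpha> (pi - y) * sin (2 * (pi - y)))
       = 2 * sin (2 * y) * (sin y / (2 * sin (y/2)) powr \<alpha> - sin y / (2 * cos (y/2)) powr \<alpha>)"
proof -
  have a: "sin (2 * (pi - y)) = - sin (2 * y)"
  proof -
    have "sin (2 * (pi - y)) = sin (2 * pi - 2 * y)" by (rule arg_cong[where f=sin]) simp
    then show ?thesis by simp
  qed
  have b: "sin ((pi - y) / 2) = cos (y/2)"
  proof -
    have "sin ((pi - y) / 2) = sin (pi/2 - y/2)" by (rule arg_cong[where f=sin]) (simp add: field_simps)
    then show ?thesis by (simp add: sin_cos_eq)
  qed
  have s0: "0 \<le> sin (y/2)" using assms by (intro sin_ge_zero) auto
  have c0: "0 \<le> cos (y/2)" using assms by (intro cos_ge_zero) auto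
  show ?thesis unfolding ss_def a b using s0 c0 by (simp add: algebra_simps)
qed

lemma S_pos:
  assumes "0 < \<alpha>" "\<alpha> < 2"
  shows "0 < integral {0..2*pi} (\<lambda>y. ss \<alpha> y * sin (2 * y))"
proof -
  define T1 where "T1 = (\<lambda>y. ss \<alpha> y * sin (2 * y))"
  have i: "T1 integrable_on {0..2*pi}"
    using T1_abs_int[OF assms] unfolding T1_def absolutely_integrable_on_def by simp
  have "integral {0..2*pi} T1 = integral {0..pi} (\<lambda>y. T1 y + T1 (2 * pi - y))"
    using split_reflect[OF i] by simp
  also have "(\<lambda>y. T1 y + T1 (2 * pi - y)) = (\<lambda>y. 2 * T1 y)"
    unfolding T1_def T1_reflect by simp
  finally have e1: "integral {0..2*pi} T1 = integral {0..pi} (\<lambda>y. 2 * T1 y)" .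
  have i2: "(\<lambda>y. 2 * T1 y) integrable_on {0..pi}"
  proof -
    have "T1 integrable_on {0..pi}" by (rule integrable_subinterval_real[OF i]) (use pi_gt_zero in auto)
    from integrable_on_cmult_left[OF this, of 2] show ?thesis by simp
  qed
  have e2: "integral {0..pi} (\<lambda>y. 2 * T1 y) = integral {0..pi/2} (\<lambda>y. 2 * T1 y + 2 * T1 (pi - y))"
    using split_reflect[OF i2] by simp
  define V where "V = (\<lambda>y. 2 * T1 y + 2 * T1 (pi - y))"
  have i3: "V integrable_on {0..pi/2}"
  proof -
    have "(\<lambda>y. 2 * T1 (0 + pi - y)) integrable_on {0..pi}" by (rule integrable_reflect_ab[OF i2])
    then have "(\<lambda>y. 2 * T1 y + 2 * T1 (0 + pi - y)) integrable_on {0..pi}" by (rule integrable_add[OF i2])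
    then have "(\<lambda>y. 2 * T1 y + 2 * T1 (pi - y)) integrable_on {0..pi}" by simp
    then show ?thesis unfolding V_def by (rule integrable_subinterval_real) (use pi_gt_zero in auto)
  qed
  have Vf: "V y = 2 * sin (2 * y) * (sin y / (2 * sin (y/2)) powr \<alpha> - sin y / (2 * cos (y/2)) powr \<alpha>)"
    if "0 \<le> y" "y \<le> pi" for y
    unfolding V_def T1_def using V_formula[OF that] by simp
  have pos: "0 < integral {0..pi/2} V"
  proof (rule integral_pos_lemma[OF i3, where c="pi/8" and d="3*pi/8"])
    show "0 \<le> V y" if y: "y \<in> {0..pi/2}" for y
    proof -
      have y1: "0 \<le> y" "y \<le> pi/2" using y by auto
      have s2: "0 \<le> sin (2 * y)" using y1 by (intro sin_ge_zero) auto
      have s1: "0 \<le> sin y" using y1 by (intro sin_ge_zero) auto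
      show ?thesis
      proof (cases "y = 0")
        case True then show ?thesis using Vf[of y] y1 by simp
      next
        case False
        have sp: "0 < sin (y/2)" using y1 False by (intro sin_gt_zero) auto
        have sc: "sin (y/2) \<le> cos (y/2)"
        proof -
          have "sin (y/2) \<le> sin (pi/2 - y/2)" by (subst sin_mono_le_eq) (use y1 pi_gt_zero in linarith)+
          then show ?thesis by (simp add: sin_cos_eq)
        qed
        have "(2 * sin (y/2)) powr \<alpha> \<le> (2 * cos (y/2)) powr \<alpha>"
          using sc sp assms by (intro powr_mono2) auto
        then have "sin y / (2 * cos (y/2)) powr \<alpha> \<le> sin y / (2 * sin (y/2)) powr \<alpha>"
          using sp s1 sc by (intro divide_left_mono mult_pos_pos) auto
        then show ?thesis using Vf[of y] y1 s2 by (simp add: mult_nonneg_nonneg)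
      qed
    qed
    show "0 < V y" if y: "y \<in> {pi/8..3*pi/8}" for y
    proof -
      have y1: "pi/8 \<le> y" "y \<le> 3*pi/8" using y by auto
      have s2: "0 < sin (2 * y)" using y1 pi_gt_zero by (intro sin_gt_zero) linarith+
      have s1: "0 < sin y" using y1 pi_gt_zero by (intro sin_gt_zero) linarith+
      have sp: "0 < sin (y/2)" using y1 pi_gt_zero by (intro sin_gt_zero) linarith+
      have sc: "sin (y/2) < cos (y/2)"
      proof -
        have "sin (y/2) < sin (pi/2 - y/2)" by (subst sin_mono_less_eq) (use y1 pi_gt_zero in linarith)+
        then show ?thesis by (simp add: sin_cos_eq)
      qed
      have "(2 * sin (y/2)) powr \<alpha> < (2 * cos (y/2)) powr \<alpha>"
        using sc sp assms by (intro powr_less_mono2) auto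
      then have "sin y / (2 * cos (y/2)) powr \<alpha> < sin y / (2 * sin (y/2)) powr \<alpha>"
        using sp s1 sc by (intro divide_strict_left_mono mult_pos_pos) auto
      then show ?thesis using Vf[of y] y1 s2 pi_gt_zero by simp
    qed
    show "continuous_on {pi/8..3*pi/8} V"
    proof -
      let ?S = "{pi/8..3*pi/8}"
      have pos2: "0 < sin (y/2)" "0 < cos (y/2)" if "y \<in> ?S" for y
      proof -
        have y1: "pi/8 \<le> y" "y \<le> 3*pi/8" using that by auto
        show "0 < sin (y/2)" using y1 pi_gt_zero by (intro sin_gt_zero) linarith+
        show "0 < cos (y/2)" using y1 pi_gt_zero by (intro cos_gt_zero) linarith+
      qed
      have n1: "\<forall>y\<in>?S. 2 * sin (y/2) \<noteq> 0" using pos2(1) by force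
      have n2: "\<forall>y\<in>?S. 2 * cos (y/2) \<noteq> 0" using pos2(2) by force
      have n3: "\<forall>y\<in>?S. (2 * sin (y/2)) powr \<alpha> \<noteq> 0" using pos2(1) by force
      have n4: "\<forall>y\<in>?S. (2 * cos (y/2)) powr \<alpha> \<noteq> 0" using pos2(2) by force
      have c: "continuous_on ?S (\<lambda>y. 2 * sin (2 * y) * (sin y / (2 * sin (y/2)) powr \<alpha> - sin y / (2 * cos (y/2)) powr \<alpha>))"
        by (intro continuous_intros n1 n2 n3 n4) simp_all
      have eq: "\<And>y. y \<in> ?S \<Longrightarrow> V y = 2 * sin (2 * y) * (sin y / (2 * sin (y/2)) powr \<alpha> - sin y / (2 * cos (y/2)) powr \<alpha>)"
      proof -
        fix y assume "y \<in> ?S"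
        then have "0 \<le> y" "y \<le> pi" using pi_gt_zero by auto
        then show "V y = 2 * sin (2 * y) * (sin y / (2 * sin (y/2)) powr \<alpha> - sin y / (2 * cos (y/2)) powr \<alpha>)"
          by (rule Vf)
      qed
      show ?thesis by (rule continuous_on_eq[OF c]) (simp add: eq)
    qed
  qed (use pi_gt_zero in auto)
  show ?thesis using e1 e2 pos unfolding V_def T1_def by simp
qed

lemma trig_prod: "sin (4 * (x::real)) * (sin x * cos x) = cos (2 * x) / 4 - cos (6 * x) / 4"
proof -
  have a: "cos (6 * x) = cos (4 * x) * cos (2 * x) - sin (4 * x) * sin (2 * x)"
    using cos_add[of "4 * x" "2 * x"] by simp
  have b: "cos (2 * x) = cos (4 * x) * cos (2 * x) + sin (4 * x) * sin (2 * x)"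
    using cos_diff[of "4 * x" "2 * x"] by simp
  have c: "sin (2 * x) = 2 * sin x * cos x" by (rule sin_double)
  show ?thesis using a b c by (simp add: algebra_simps)
qed

lemma sin_int_zero: "integral {0..pi} (\<lambda>x. sin (4 * x) * (sin x * cos x)) = 0"
proof -
  let ?F = "\<lambda>x. sin (2 * x) / 8 - sin (6 * x) / 24"
  have "((\<lambda>x. sin (4 * x) * (sin x * cos x)) has_integral (?F pi - ?F 0)) {0..pi}"
  proof (rule fundamental_theorem_of_calculus)
    show "0 \<le> pi" by simp
    fix x assume "x \<in> {0..pi}"
    have "(?F has_real_derivative (cos (2 * x) / 4 - cos (6 * x) / 4)) (at x within {0..pi})"
      by (auto intro!: derivative_eq_intros)
    then show "(?F has_vector_derivative (sin (4 * x) * (sin x * cos x))) (at x within {0..pi})"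
      unfolding trig_prod has_real_derivative_iff_has_vector_derivative .
  qed
  moreover have "?F pi - ?F 0 = 0"
  proof -
    have "sin (2 * pi) = 0" by simp
    moreover have "sin (6 * pi) = 0" by (rule sin_npi_numeral)
    ultimately show ?thesis by simp
  qed
  ultimately show ?thesis by (simp add: integral_unique)
qed

lemma c_alpha_nz:
  assumes "0 < \<alpha>" "\<alpha> < 2" "\<theta>1 \<noteq> \<theta>2"
  shows "c_alpha \<alpha> \<theta>1 \<theta>2 \<noteq> 0"
proof -
  have g1: "0 < Gamma (\<alpha> / 2)" using assms by (intro Gamma_real_pos) auto
  have g2: "0 < Gamma ((2 - \<alpha>) / 2)" using assms by (intro Gamma_real_pos) auto
  have "Gamma (\<alpha> / 2) \<noteq> 0" using g1 by linarith
  then have "(\<theta>2 - \<theta>1) * Gamma (\<alpha> / 2) \<noteq> 0" using assms by simp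
  moreover have "pi\<^sup>2 * 2 powr (2 - \<alpha>) * Gamma ((2 - \<alpha>) / 2) \<noteq> 0" using g2 by simp
  ultimately show ?thesis unfolding c_alpha_def by simp
qed

theorem theorem1:
  fixes \<alpha> \<theta>1 \<theta>2 R1 R2 :: real
  assumes "0 < \<alpha>" and "\<alpha> < 2" and "\<theta>1 \<noteq> \<theta>2"
    and "0 < R1" and "0 < R2" and "R1 \<noteq> R2"
  shows "\<not> (\<exists>\<Omega>::real. \<forall>x\<in>{0..2*pi}.
           inner (patch_velocity \<alpha> \<theta>1 \<theta>2 (ellipse R1 R2) (ellipse_deriv R1 R2) x)
                 (perp (ellipse_deriv R1 R2 x))
         = inner (\<i> * complex_of_real \<Omega> * ellipse R1 R2 x) (perp (ellipse_deriv R1 R2 x)))"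
proof
  assume "\<exists>\<Omega>::real. \<forall>x\<in>{0..2*pi}.
           inner (patch_velocity \<alpha> \<theta>1 \<theta>2 (ellipse R1 R2) (ellipse_deriv R1 R2) x)
                 (perp (ellipse_deriv R1 R2 x))
         = inner (\<i> * complex_of_real \<Omega> * ellipse R1 R2 x) (perp (ellipse_deriv R1 R2 x))"
  then obtain \<Omega> :: real where H: "\<And>x. x \<in> {0..2*pi} \<Longrightarrow>
           inner (patch_velocity \<alpha> \<theta>1 \<theta>2 (ellipse R1 R2) (ellipse_deriv R1 R2) x)
                 (perp (ellipse_deriv R1 R2 x))
         = inner (\<i> * complex_of_real \<Omega> * ellipse R1 R2 x) (perp (ellipse_deriv R1 R2 x))" by blast
  define c where "c = c_alpha \<alpha> \<theta>1 \<theta>2"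
  have c0: "c \<noteq> 0" unfolding c_def by (rule c_alpha_nz) (use assms in auto)
  define K where "K = \<Omega> * (R2^2 - R1^2) / (c * (R1 * R2))"
  have J: "integral {0..2*pi} (gg \<alpha> R1 R2 x) = K * (sin x * cos x)" if x: "x \<in> {0..2*pi}" for x
  proof -
    have "c * (R1 * R2 * integral {0..2*pi} (gg \<alpha> R1 R2 x)) = \<Omega> * (R2^2 - R1^2) * sin x * cos x"
      using H[OF x] unfolding lhs_reduce[OF assms(1,2,4,5)] inner_rhs c_def .
    moreover have "c * (R1 * R2) \<noteq> 0" using c0 assms by simp
    ultimately show ?thesis unfolding K_def by (simp add: field_simps)
  qed
  have "integral {0..pi} (\<lambda>x. sin (4 * x) * integral {0..2*pi} (gg \<alpha> R1 R2 x))
      = integral {0..pi} (\<lambda>x. K * (sin (4 * x) * (sin x * cos x)))"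
    by (rule integral_cong) (use J pi_gt_zero in auto)
  also have "\<dots> = 0" using sin_int_zero by simp
  finally have z: "integral {0..pi} (\<lambda>x. sin (4 * x) * integral {0..2*pi} (gg \<alpha> R1 R2 x)) = 0" .
  have "integral {0..2*pi} (\<lambda>y. ss \<alpha> y * sin (2 * y) * AA \<alpha> R1 R2)
      = AA \<alpha> R1 R2 * integral {0..2*pi} (\<lambda>y. ss \<alpha> y * sin (2 * y))"
    by (simp add: mult.commute)
  with z fubini_identity[OF assms(1,2,4,5)]
  have "AA \<alpha> R1 R2 * integral {0..2*pi} (\<lambda>y. ss \<alpha> y * sin (2 * y)) = 0" by auto
  moreover have "0 < AA \<alpha> R1 R2" by (rule AA_pos) (use assms in auto)
  moreover have "0 < integral {0..2*pi} (\<lambda>y. ss \<alpha> y * sin (2 * y))" by (rule S_pos) (use assms in auto)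
  ultimately show False by simp
qed

end
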